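(* Let $r>0$, $L\ge2$ with $rL\in\mathbb{N}$, and let $\eta^L\sim\nu_L$, the stationary distribution of the RBB process with $L$ bins and $N=rL$ balls. Writing $w_k(\eta):=\mathbf{1}(\eta_k>0)$, $$\mathrm{Cov}\big(w_1(\eta^L),w_2(\eta^L)\big)=-\mathbb{E}\big(w_1(\eta^L)\big)^2+2\,\mathbb{E}\big(w_1(\eta^L)\big)\frac{(r+1)L-1}{L-1}-2r\frac{L}{L-1}.$$
   Context: RBB process with $L$ bins: Markov chain on $\mathbb{Z}_+^L$; with $w(\eta):=(\mathbf{1}(\eta_1>0),\dots,\mathbf{1}(\eta_L>0))$ and $K(\eta):=\sum_j\mathbf{1}(\eta_j>0)$, from state $\eta$ the next state is $\eta-w(\eta)+B(\eta)$ where $B(\eta)$ is multinomial with $K(\eta)$ trials and cell probabilities $(1/L,\dots,1/L)$. It conserves the total number of balls, and restricted to configurations with $N$ balls it is an ergodic finite Markov chain with a unique stationary distribution $\nu_L$, which is exchangeable. *)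

theory Defs
  imports Complex_Main
begin

text \<open>Configurations of the RBB process with L bins (indexed 0..L-1, so the
paper's bins 1 and 2 are 0 and 1) are functions nat \<Rightarrow> nat vanishing from L on.\<close>

definition rbb_states :: "nat \<Rightarrow> nat \<Rightarrow> (nat \<Rightarrow> nat) set" where
  "rbb_states L N = {\<eta>. (\<forall>i\<ge>L. \<eta> i = 0) \<and> (\<Sum>i<L. \<eta> i) = N}"

definition occ :: "(nat \<Rightarrow> nat) \<Rightarrow> nat \<Rightarrow> nat" where
  "occ \<eta> i = (if \<eta> i > 0 then 1 else 0)"

definition nonempty_count :: "nat \<Rightarrow> (nat \<Rightarrow> nat) \<Rightarrow> nat" where
  "nonempty_count L \<eta> = card {i. i < L \<and> 0 < \<eta> i}"

definition multinom_prob :: "nat \<Rightarrow> nat \<Rightarrow> (nat \<Rightarrow> nat) \<Rightarrow> real" where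
  "multinom_prob L k b =
     (if (\<forall>i\<ge>L. b i = 0) \<and> (\<Sum>i<L. b i) = k
      then fact k / (\<Prod>i<L. fact (b i)) / real L ^ k else 0)"

text \<open>Transition probability eta \<rightarrow> eta' = eta - w(eta) + B(eta)\<close>
definition rbb_trans :: "nat \<Rightarrow> (nat \<Rightarrow> nat) \<Rightarrow> (nat \<Rightarrow> nat) \<Rightarrow> real" where
  "rbb_trans L \<eta> \<eta>' =
     (if \<forall>i. \<eta> i \<le> \<eta>' i + occ \<eta> i
      then multinom_prob L (nonempty_count L \<eta>) (\<lambda>i. \<eta>' i + occ \<eta> i - \<eta> i)
      else 0)"

definition rbb_stationary :: "nat \<Rightarrow> nat \<Rightarrow> ((nat \<Rightarrow> nat) \<Rightarrow> real) \<Rightarrow> bool" where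
  "rbb_stationary L N \<nu> \<longleftrightarrow>
     (\<forall>\<eta>\<in>rbb_states L N. 0 \<le> \<nu> \<eta>) \<and>
     (\<Sum>\<eta>\<in>rbb_states L N. \<nu> \<eta>) = 1 \<and>
     (\<forall>\<eta>'\<in>rbb_states L N. \<nu> \<eta>' = (\<Sum>\<eta>\<in>rbb_states L N. \<nu> \<eta> * rbb_trans L \<eta> \<eta>'))"

definition rbb_expect :: "nat \<Rightarrow> nat \<Rightarrow> ((nat \<Rightarrow> nat) \<Rightarrow> real) \<Rightarrow> ((nat \<Rightarrow> nat) \<Rightarrow> real) \<Rightarrow> real" where
  "rbb_expect L N \<nu> f = (\<Sum>\<eta>\<in>rbb_states L N. \<nu> \<eta> * f \<eta>)"

end

theory Submission imports Defs begin

lemma occ_le: "occ \<eta> i \<le> \<eta> i" by (simp add: occ_def)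
lemma occ_le1: "occ \<eta> i \<le> 1" by (simp add: occ_def)
lemma occ_sq: "real (occ \<eta> i) * real (occ \<eta> i) = real (occ \<eta> i)" by (simp add: occ_def)

lemma nonempty_count_sum: "nonempty_count L \<eta> = (\<Sum>i<L. occ \<eta> i)"
proof -
  have "{i. i < L \<and> 0 < \<eta> i} = {i\<in>{..<L}. 0 < \<eta> i}" by auto
  then show ?thesis unfolding nonempty_count_def occ_def
    by (simp add: sum.inter_filter[symmetric])
qed

lemma finite_states: "finite (rbb_states L N)"
proof -
  have "rbb_states L N \<subseteq> {f. (\<forall>i. f i \<le> N) \<and> (\<forall>i. i \<notin> {..<L} \<longrightarrow> f i = 0)}"
  proof
    fix \<eta> assume h: "\<eta> \<in> rbb_states L N"
    have le: "\<eta> i \<le> N" for i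
    proof (cases "i < L")
      case True
      then have "\<eta> i \<le> (\<Sum>i<L. \<eta> i)" by (intro member_le_sum) auto
      then show ?thesis using h unfolding rbb_states_def by simp
    next
      case False then show ?thesis using h unfolding rbb_states_def by simp
    qed
    then show "\<eta> \<in> {f. (\<forall>i. f i \<le> N) \<and> (\<forall>i. i \<notin> {..<L} \<longrightarrow> f i = 0)}"
      using h unfolding rbb_states_def by auto
  qed
  moreover have "finite {f. (\<forall>i. f i \<le> N) \<and> (\<forall>i. i \<notin> {..<L} \<longrightarrow> f i = (0::nat))}"
    by (rule finite_subset[OF _ finite_set_of_finite_funs[of "{..<L}" "{..N}" 0]]) auto
  ultimately show ?thesis by (rule finite_subset)
qed

lemma sum_remove_real:
  fixes F :: "nat \<Rightarrow> real"
  assumes "finite A" "j \<in> A"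
  shows "(\<Sum>i\<in>A. F ((b(j:=v)) i)) = (\<Sum>i\<in>A. F (b i)) - F (b j) + F v"
proof -
  have "(\<Sum>i\<in>A. F ((b(j:=v)) i)) = F v + (\<Sum>i\<in>A-{j}. F ((b(j:=v)) i))"
    using sum.remove[OF assms, of "\<lambda>i. F ((b(j:=v)) i)"] by simp
  also have "(\<Sum>i\<in>A-{j}. F ((b(j:=v)) i)) = (\<Sum>i\<in>A-{j}. F (b i))"
    by (rule sum.cong) auto
  also have "\<dots> = (\<Sum>i\<in>A. F (b i)) - F (b j)"
    using sum.remove[OF assms, of "\<lambda>i. F (b i)"] by simp
  finally show ?thesis by simp
qed

lemma sum_upd_suc:
  assumes "finite A" "j \<in> A"
  shows "(\<Sum>i\<in>A. (b(j:=b j + 1)) i) = (\<Sum>i\<in>A. b i) + (1::nat)"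
proof -
  have "(\<Sum>i\<in>A. (b(j:=b j + 1)) i) = (b j + 1) + (\<Sum>i\<in>A-{j}. (b(j:=b j + 1)) i)"
    using sum.remove[OF assms, of "b(j:=b j + 1)"] by simp
  also have "(\<Sum>i\<in>A-{j}. (b(j:=b j + 1)) i) = (\<Sum>i\<in>A-{j}. b i)"
    by (rule sum.cong) auto
  finally show ?thesis using sum.remove[OF assms, of b] by simp
qed

lemma mp_nonneg: "0 \<le> multinom_prob L K b"
  unfolding multinom_prob_def by (simp add: prod_nonneg)

lemma mp_eq: "b \<in> rbb_states L K \<Longrightarrow>
   multinom_prob L K b = fact K / (\<Prod>i<L. fact (b i)) / real L ^ K"
  unfolding multinom_prob_def rbb_states_def by simp

lemma mp_pos: "0 < L \<Longrightarrow> b \<in> rbb_states L K \<Longrightarrow> 0 < multinom_prob L K b"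
  by (simp add: mp_eq prod_pos)

lemma upd_in: "b \<in> rbb_states L K \<Longrightarrow> j < L \<Longrightarrow> b(j:=b j+1) \<in> rbb_states L (Suc K)"
  unfolding rbb_states_def using sum_upd_suc[of "{..<L}" j b] by auto

lemma mp_step:
  assumes L: "0 < L" and b: "b \<in> rbb_states L K" and j: "j < L"
  shows "multinom_prob L (Suc K) (b(j:=b j+1)) * real (b j + 1) / real (Suc K)
       = multinom_prob L K b / real L"
proof -
  have jA: "j \<in> {..<L}" using j by simp
  have P1: "(\<Prod>i<L. fact ((b(j:=b j+1)) i)) = (fact (b j + 1) :: real) * (\<Prod>i\<in>{..<L}-{j}. fact (b i))"
  proof -
    have "(\<Prod>i\<in>{..<L}-{j}. (fact ((b(j:=b j+1)) i)::real)) = (\<Prod>i\<in>{..<L}-{j}. fact (b i))"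
      by (rule prod.cong) auto
    then show ?thesis
      using prod.remove[OF finite_lessThan jA, of "\<lambda>i. (fact ((b(j:=b j+1)) i)::real)"] by simp
  qed
  have P0: "(\<Prod>i<L. fact (b i)) = (fact (b j) :: real) * (\<Prod>i\<in>{..<L}-{j}. fact (b i))"
    using prod.remove[OF finite_lessThan jA, of "\<lambda>i. (fact (b i)::real)"] by simp
  have pos: "(\<Prod>i\<in>{..<L}-{j}. fact (b i)) > (0::real)" by (simp add: prod_pos)
  define p where "p = (\<Prod>i\<in>{..<L}-{j}. (fact (b i)::real))"
  have f1: "(fact (b j + 1)::real) = real (b j + 1) * fact (b j)" by (simp add: fact_Suc)
  have f2: "(fact (Suc K)::real) = real (Suc K) * fact K" by (simp add: fact_Suc)
  have fp: "(fact (b j)::real) > 0" "(fact K :: real) > 0" by auto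
  have "multinom_prob L (Suc K) (b(j:=b j+1)) * real (b j + 1) / real (Suc K)
     = (real (Suc K) * fact K) / (real (b j + 1) * fact (b j) * p) / (real L * real L ^ K) * real (b j + 1) / real (Suc K)"
    unfolding mp_eq[OF upd_in[OF b j]] P1 f1 f2 p_def by simp
  also have "\<dots> = fact K / (fact (b j) * p) / real L ^ K / real L"
    using L pos fp unfolding p_def[symmetric]
    by (simp add: divide_simps del: of_nat_Suc of_nat_add)
  also have "\<dots> = multinom_prob L K b / real L"
    unfolding mp_eq[OF b] P0 p_def by simp
  finally show ?thesis .
qed

lemma rec_j:
  assumes L: "0 < L" and j: "j < L"
  shows "(\<Sum>b\<in>rbb_states L K. multinom_prob L K b / real L * g (b(j:=b j+1)))
       = (\<Sum>b\<in>rbb_states L (Suc K). multinom_prob L (Suc K) b * real (b j) / real (Suc K) * g b)"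
proof -
  define h where "h = (\<lambda>b::nat\<Rightarrow>nat. b(j:=b j+1))"
  define A' where "A' = {b\<in>rbb_states L (Suc K). 0 < b j}"
  have inj: "inj_on h (rbb_states L K)"
    unfolding h_def inj_on_def by (auto simp: fun_eq_iff split: if_splits)
  have img: "h ` rbb_states L K = A'"
  proof
    show "h ` rbb_states L K \<subseteq> A'" unfolding A'_def h_def using upd_in j by auto
  next
    show "A' \<subseteq> h ` rbb_states L K"
    proof
      fix b assume b: "b \<in> A'"
      define c where "c = b(j := b j - 1)"
      have hc: "h c = b" using b unfolding h_def c_def A'_def by (auto simp: fun_eq_iff)
      have "(\<Sum>i<L. c i) + 1 = (\<Sum>i<L. b i)"
        using sum_upd_suc[of "{..<L}" j c] hc j unfolding h_def by (simp del: fun_upd_apply)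
      then have "c \<in> rbb_states L K" using b j unfolding A'_def rbb_states_def c_def by auto
      then show "b \<in> h ` rbb_states L K" using hc by force
    qed
  qed
  have "(\<Sum>b\<in>rbb_states L (Suc K). multinom_prob L (Suc K) b * real (b j) / real (Suc K) * g b)
      = (\<Sum>b\<in>A'. multinom_prob L (Suc K) b * real (b j) / real (Suc K) * g b)"
    by (rule sum.mono_neutral_right[OF finite_states]) (auto simp: A'_def)
  also have "\<dots> = (\<Sum>b\<in>rbb_states L K. multinom_prob L (Suc K) (h b) * real (h b j) / real (Suc K) * g (h b))"
    unfolding img[symmetric] by (rule sum.reindex[OF inj, unfolded comp_def])
  also have "\<dots> = (\<Sum>b\<in>rbb_states L K. multinom_prob L K b / real L * g (b(j:=b j+1)))"
  proof (rule sum.cong)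
    fix b assume b: "b \<in> rbb_states L K"
    show "multinom_prob L (Suc K) (h b) * real (h b j) / real (Suc K) * g (h b) =
          multinom_prob L K b / real L * g (b(j:=b j+1))"
      using mp_step[OF L b j] unfolding h_def by simp
  qed simp
  finally show ?thesis by simp
qed

lemma rec_all:
  assumes L: "0 < L"
  shows "(\<Sum>b\<in>rbb_states L K. multinom_prob L K b / real L * (\<Sum>j<L. g (b(j:=b j+1))))
       = (\<Sum>b\<in>rbb_states L (Suc K). multinom_prob L (Suc K) b * g b)"
proof -
  have "(\<Sum>b\<in>rbb_states L K. multinom_prob L K b / real L * (\<Sum>j<L. g (b(j:=b j+1))))
      = (\<Sum>j<L. \<Sum>b\<in>rbb_states L K. multinom_prob L K b / real L * g (b(j:=b j+1)))"
    by (simp add: sum_distrib_left sum.swap[of _ "rbb_states L K"])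
  also have "\<dots> = (\<Sum>j<L. \<Sum>b\<in>rbb_states L (Suc K). multinom_prob L (Suc K) b * real (b j) / real (Suc K) * g b)"
    using rec_j[OF L] by simp
  also have "\<dots> = (\<Sum>b\<in>rbb_states L (Suc K). multinom_prob L (Suc K) b * g b / real (Suc K) * (\<Sum>j<L. real (b j)))"
    by (simp add: sum.swap[of _ "{..<L}"] sum_distrib_left sum_divide_distrib mult_ac)
  also have "\<dots> = (\<Sum>b\<in>rbb_states L (Suc K). multinom_prob L (Suc K) b * g b)"
  proof (rule sum.cong)
    fix b assume "b \<in> rbb_states L (Suc K)"
    then have "(\<Sum>j<L. real (b j)) = real (Suc K)" unfolding rbb_states_def
      by (metis (mono_tags, lifting) mem_Collect_eq of_nat_sum)
    then show "multinom_prob L (Suc K) b * g b / real (Suc K) * (\<Sum>j<L. real (b j)) = multinom_prob L (Suc K) b * g b"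
      by simp
  qed simp
  finally show ?thesis .
qed

lemma sum_real_states: "b \<in> rbb_states L K \<Longrightarrow> (\<Sum>j<L. real (b j)) = real K"
  unfolding rbb_states_def by (metis (mono_tags, lifting) mem_Collect_eq of_nat_sum)

lemma states_zero: "rbb_states L 0 = {(\<lambda>_. 0)}"
proof -
  have "b = (\<lambda>_. 0)" if "b \<in> rbb_states L 0" for b
  proof
    fix i show "b i = 0"
      using that unfolding rbb_states_def by (cases "i < L") auto
  qed
  then show ?thesis unfolding rbb_states_def by auto
qed

lemma M0: "0 < L \<Longrightarrow> (\<Sum>b\<in>rbb_states L K. multinom_prob L K b) = 1"
proof (induction K)
  case 0
  then show ?case by (simp add: states_zero multinom_prob_def)
next
  case (Suc K)
  have "(\<Sum>b\<in>rbb_states L (Suc K). multinom_prob L (Suc K) b * 1)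
     = (\<Sum>b\<in>rbb_states L K. multinom_prob L K b / real L * (\<Sum>j<L. 1))"
    using rec_all[OF Suc.prems, where g="\<lambda>_. 1" and K=K] by simp
  also have "\<dots> = (\<Sum>b\<in>rbb_states L K. multinom_prob L K b)" using Suc.prems by simp
  finally show ?case using Suc by simp
qed

lemma M1: "0 < L \<Longrightarrow> i < L \<Longrightarrow> (\<Sum>b\<in>rbb_states L K. multinom_prob L K b * real (b i)) = real K / real L"
proof (induction K)
  case 0
  then show ?case by (simp add: states_zero multinom_prob_def)
next
  case (Suc K)
  have e: "(\<Sum>j<L. real ((b(j:=b j+1)) i)) = real L * real (b i) + 1" for b
  proof -
    have "(\<Sum>j<L. real ((b(j:=b j+1)) i)) = (\<Sum>j<L. real (b i) + (if j = i then 1 else 0))"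
      by (rule sum.cong) auto
    also have "\<dots> = real L * real (b i) + 1" using Suc.prems by (simp add: sum.distrib)
    finally show ?thesis .
  qed
  have "(\<Sum>b\<in>rbb_states L (Suc K). multinom_prob L (Suc K) b * real (b i))
     = (\<Sum>b\<in>rbb_states L K. multinom_prob L K b / real L * (real L * real (b i) + 1))"
    using rec_all[OF Suc.prems(1), where g="\<lambda>b. real (b i)" and K=K] e by simp
  also have "\<dots> = (\<Sum>b\<in>rbb_states L K. multinom_prob L K b * real (b i)) + (\<Sum>b\<in>rbb_states L K. multinom_prob L K b) / real L"
  proof -
    have "(\<Sum>b\<in>rbb_states L K. multinom_prob L K b / real L * (real L * real (b i) + 1))
       = (\<Sum>b\<in>rbb_states L K. multinom_prob L K b * real (b i) + multinom_prob L K b / real L)"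
      using Suc.prems by (intro sum.cong) (auto simp: field_simps)
    then show ?thesis by (simp add: sum.distrib sum_divide_distrib)
  qed
  also have "\<dots> = real (Suc K) / real L" using Suc M0[OF Suc.prems(1), of K] by (simp add: field_simps)
  finally show ?case .
qed

lemma M2: "0 < L \<Longrightarrow> (\<Sum>b\<in>rbb_states L K. multinom_prob L K b * (\<Sum>i<L. (real (b i))^2))
   = real K + real K * (real K - 1) / real L"
proof (induction K)
  case 0
  then show ?case by (simp add: states_zero multinom_prob_def)
next
  case (Suc K)
  have e: "(\<Sum>j<L. (\<Sum>i<L. (real ((b(j:=b j+1)) i))^2)) = real L * (\<Sum>i<L. (real (b i))^2) + 2 * real K + real L"
    if b: "b \<in> rbb_states L K" for b
  proof -
    have "(\<Sum>j<L. (\<Sum>i<L. (real ((b(j:=b j+1)) i))^2))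
        = (\<Sum>j<L. (\<Sum>i<L. (real (b i))^2) + 2 * real (b j) + 1)"
    proof (rule sum.cong)
      fix j assume "j \<in> {..<L}"
      then show "(\<Sum>i<L. (real ((b(j:=b j+1)) i))^2) = (\<Sum>i<L. (real (b i))^2) + 2 * real (b j) + 1"
        using sum_remove_real[OF finite_lessThan, where j=j and F="\<lambda>x. (real x)^2" and b=b and v="b j + 1"]
        by (simp add: power2_eq_square algebra_simps)
    qed simp
    also have "\<dots> = real L * (\<Sum>i<L. (real (b i))^2) + 2 * real K + real L"
      using sum_real_states[OF b] by (simp add: sum.distrib sum_distrib_left[symmetric])
    finally show ?thesis .
  qed
  have "(\<Sum>b\<in>rbb_states L (Suc K). multinom_prob L (Suc K) b * (\<Sum>i<L. (real (b i))^2))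
     = (\<Sum>b\<in>rbb_states L K. multinom_prob L K b / real L * (real L * (\<Sum>i<L. (real (b i))^2) + 2 * real K + real L))"
    using rec_all[OF Suc.prems(1), where g="\<lambda>b. (\<Sum>i<L. (real (b i))^2)" and K=K] e
    by (metis (no_types, lifting) sum.cong)
  also have "\<dots> = (\<Sum>b\<in>rbb_states L K. multinom_prob L K b * (\<Sum>i<L. (real (b i))^2))
      + (2 * real K / real L + 1) * (\<Sum>b\<in>rbb_states L K. multinom_prob L K b)"
  proof -
    have "(\<Sum>b\<in>rbb_states L K. multinom_prob L K b / real L * (real L * (\<Sum>i<L. (real (b i))^2) + 2 * real K + real L))
       = (\<Sum>b\<in>rbb_states L K. multinom_prob L K b * (\<Sum>i<L. (real (b i))^2) + (2 * real K / real L + 1) * multinom_prob L K b)"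
      using Suc.prems by (intro sum.cong) (auto simp: field_simps)
    then show ?thesis by (simp add: sum.distrib sum_distrib_left)
  qed
  also have "\<dots> = real (Suc K) + real (Suc K) * (real (Suc K) - 1) / real L"
    using Suc M0[OF Suc.prems(1), of K] by (simp add: field_simps)
  finally show ?case .
qed

lemma occ_zero: "\<eta> \<in> rbb_states L N \<Longrightarrow> L \<le> i \<Longrightarrow> occ \<eta> i = 0"
  unfolding rbb_states_def occ_def by auto

lemma b_in:
  assumes e: "\<eta> \<in> rbb_states L N" and e': "\<eta>' \<in> rbb_states L N"
    and c: "\<forall>i. \<eta> i \<le> \<eta>' i + occ \<eta> i"
  shows "(\<lambda>i. \<eta>' i + occ \<eta> i - \<eta> i) \<in> rbb_states L (nonempty_count L \<eta>)"
proof -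
  have "(\<Sum>i<L. \<eta>' i + occ \<eta> i - \<eta> i) + (\<Sum>i<L. \<eta> i) = (\<Sum>i<L. \<eta>' i) + (\<Sum>i<L. occ \<eta> i)"
    unfolding sum.distrib[symmetric] using c by (intro sum.cong) auto
  then show ?thesis using e e' occ_zero[OF e] unfolding rbb_states_def nonempty_count_sum by auto
qed

lemma trans_pos:
  assumes L: "0 < L" and e: "\<eta> \<in> rbb_states L N" and e': "\<eta>' \<in> rbb_states L N"
    and c: "\<forall>i. \<eta> i \<le> \<eta>' i + occ \<eta> i"
  shows "0 < rbb_trans L \<eta> \<eta>'"
  unfolding rbb_trans_def using c mp_pos[OF L b_in[OF e e' c]] by simp

lemma trans_nonneg: "0 \<le> rbb_trans L \<eta> \<eta>'"
  unfolding rbb_trans_def by (simp add: mp_nonneg)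

lemma trans_sum:
  assumes L: "0 < L" and e: "\<eta> \<in> rbb_states L N"
  shows "(\<Sum>\<eta>'\<in>rbb_states L N. rbb_trans L \<eta> \<eta>' * G \<eta>')
       = (\<Sum>b\<in>rbb_states L (nonempty_count L \<eta>). multinom_prob L (nonempty_count L \<eta>) b
            * G (\<lambda>i. (\<eta> i - occ \<eta> i) + b i))"
proof -
  define K where "K = nonempty_count L \<eta>"
  define h where "h = (\<lambda>b i. (\<eta> i - occ \<eta> i) + (b::nat\<Rightarrow>nat) i)"
  have inj: "inj_on h (rbb_states L K)" unfolding h_def inj_on_def by (auto simp: fun_eq_iff)
  have sub: "h ` rbb_states L K \<subseteq> rbb_states L N"
  proof
    fix x assume "x \<in> h ` rbb_states L K"
    then obtain b where b: "b \<in> rbb_states L K" and x: "x = h b" by auto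
    have "(\<Sum>i<L. x i) + (\<Sum>i<L. occ \<eta> i) = (\<Sum>i<L. \<eta> i) + (\<Sum>i<L. b i)"
      unfolding sum.distrib[symmetric] apply (intro sum.cong refl)
      subgoal for i using occ_le[of \<eta> i] unfolding x h_def by simp
      done
    then show "x \<in> rbb_states L N" using b e unfolding rbb_states_def K_def nonempty_count_sum x h_def
      by auto
  qed
  have "(\<Sum>\<eta>'\<in>rbb_states L N. rbb_trans L \<eta> \<eta>' * G \<eta>') = (\<Sum>\<eta>'\<in>h ` rbb_states L K. rbb_trans L \<eta> \<eta>' * G \<eta>')"
  proof (rule sum.mono_neutral_right[OF finite_states sub], rule ballI)
    fix \<eta>' assume h': "\<eta>' \<in> rbb_states L N - h ` rbb_states L K"
    show "rbb_trans L \<eta> \<eta>' * G \<eta>' = 0"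
    proof (cases "\<forall>i. \<eta> i \<le> \<eta>' i + occ \<eta> i")
      case True
      have "h (\<lambda>i. \<eta>' i + occ \<eta> i - \<eta> i) = \<eta>'" unfolding h_def using True occ_le[of \<eta>]
        by (auto simp: fun_eq_iff)
      then have "\<eta>' \<in> h ` rbb_states L K" using b_in[OF e _ True] h' unfolding K_def by force
      then show ?thesis using h' by simp
    next
      case False then show ?thesis unfolding rbb_trans_def by auto
    qed
  qed
  also have "\<dots> = (\<Sum>b\<in>rbb_states L K. rbb_trans L \<eta> (h b) * G (h b))"
    by (rule sum.reindex[OF inj, unfolded comp_def])
  also have "\<dots> = (\<Sum>b\<in>rbb_states L K. multinom_prob L K b * G (h b))"
  proof (rule sum.cong)
    fix b assume "b \<in> rbb_states L K"
    have c: "\<forall>i. \<eta> i \<le> h b i + occ \<eta> i" unfolding h_def using occ_le[of \<eta>] by auto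
    have "(\<lambda>i. h b i + occ \<eta> i - \<eta> i) = b" unfolding h_def
      apply (rule ext) subgoal for i using occ_le[of \<eta> i] by arith done
    then show "rbb_trans L \<eta> (h b) * G (h b) = multinom_prob L K b * G (h b)"
      unfolding rbb_trans_def K_def using c by simp
  qed simp
  finally show ?thesis unfolding h_def K_def .
qed

lemma k_real: "real (nonempty_count L \<eta>) = (\<Sum>i<L. real (occ \<eta> i))"
  by (simp add: nonempty_count_sum)

lemma sq_term: "(real (\<eta> i - occ \<eta> i))^2 = (real (\<eta> i))^2 - 2 * real (\<eta> i) + real (occ \<eta> i)"
  by (cases "\<eta> i = 0") (auto simp: occ_def of_nat_diff power2_eq_square algebra_simps)

lemma lin_term: "real (\<eta> i - occ \<eta> i) = real (\<eta> i) - real (occ \<eta> i)"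
  by (simp add: of_nat_diff occ_le)

lemma T_Q:
  assumes L: "0 < L" and e: "\<eta> \<in> rbb_states L N"
  shows "(\<Sum>\<eta>'\<in>rbb_states L N. rbb_trans L \<eta> \<eta>' * (\<Sum>i<L. (real (\<eta>' i))^2))
     = (\<Sum>i<L. (real (\<eta> i))^2) - 2 * real N + 2 * real (nonempty_count L \<eta>)
       + 2 * real (nonempty_count L \<eta>) * (real N - real (nonempty_count L \<eta>)) / real L
       + real (nonempty_count L \<eta>) * (real (nonempty_count L \<eta>) - 1) / real L"
proof -
  define K where "K = nonempty_count L \<eta>"
  define c where "c = (\<lambda>i. real (\<eta> i - occ \<eta> i))"
  define C2 where "C2 = (\<Sum>i<L. (c i)^2)"
  define mp where "mp = multinom_prob L K"
  have C2: "C2 = (\<Sum>i<L. (real (\<eta> i))^2) - 2 * real N + real K"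
  proof -
    have "C2 = (\<Sum>i<L. (real (\<eta> i))^2 - 2 * real (\<eta> i) + real (occ \<eta> i))"
      unfolding C2_def c_def sq_term by simp
    also have "\<dots> = (\<Sum>i<L. (real (\<eta> i))^2) - 2 * (\<Sum>i<L. real (\<eta> i)) + (\<Sum>i<L. real (occ \<eta> i))"
      by (simp add: sum.distrib sum_subtractf sum_distrib_left)
    finally show ?thesis using sum_real_states[OF e] k_real[of L \<eta>] unfolding K_def by simp
  qed
  have C1: "(\<Sum>i<L. c i) = real N - real K"
    unfolding c_def lin_term using sum_real_states[OF e] k_real[of L \<eta>] unfolding K_def
    by (simp add: sum_subtractf)
  have "(\<Sum>\<eta>'\<in>rbb_states L N. rbb_trans L \<eta> \<eta>' * (\<Sum>i<L. (real (\<eta>' i))^2))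
     = (\<Sum>b\<in>rbb_states L K. mp b * (\<Sum>i<L. (c i + real (b i))^2))"
    using trans_sum[OF L e, where G="\<lambda>\<eta>'. (\<Sum>i<L. (real (\<eta>' i))^2)"]
    unfolding K_def mp_def c_def by simp
  also have "\<dots> = (\<Sum>b\<in>rbb_states L K. C2 * mp b + 2 * (\<Sum>i<L. c i * (mp b * real (b i)))
                      + mp b * (\<Sum>i<L. (real (b i))^2))"
  proof (rule sum.cong)
    fix b
    have "(\<Sum>i<L. (c i + real (b i))^2) = (\<Sum>i<L. (c i)^2 + 2 * (c i * real (b i)) + (real (b i))^2)"
      by (rule sum.cong) (simp_all add: power2_sum)
    also have "\<dots> = C2 + 2 * (\<Sum>i<L. c i * real (b i)) + (\<Sum>i<L. (real (b i))^2)"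
      unfolding C2_def by (simp add: sum.distrib sum_distrib_left)
    finally show "mp b * (\<Sum>i<L. (c i + real (b i))^2) = C2 * mp b + 2 * (\<Sum>i<L. c i * (mp b * real (b i)))
                      + mp b * (\<Sum>i<L. (real (b i))^2)"
      by (simp add: algebra_simps sum_distrib_left)
  qed simp
  also have "\<dots> = C2 * (\<Sum>b\<in>rbb_states L K. mp b) + 2 * (\<Sum>i<L. c i * (\<Sum>b\<in>rbb_states L K. mp b * real (b i)))
                      + (\<Sum>b\<in>rbb_states L K. mp b * (\<Sum>i<L. (real (b i))^2))"
    by (simp add: sum.distrib sum_distrib_left sum.swap[of _ "rbb_states L K"])
  also have "\<dots> = C2 + 2 * (\<Sum>i<L. c i * (real K / real L)) + (real K + real K * (real K - 1) / real L)"
    unfolding mp_def using M0[OF L] M1[OF L] M2[OF L] by simp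
  also have "\<dots> = C2 + 2 * (real K / real L) * (\<Sum>i<L. c i) + (real K + real K * (real K - 1) / real L)"
    by (simp add: sum_distrib_right sum_distrib_left sum_divide_distrib mult_ac)
  finally show ?thesis unfolding C1 C2 K_def[symmetric] by (simp add: algebra_simps)
qed

lemma state_le: "x \<in> rbb_states L N \<Longrightarrow> x i \<le> N"
proof (cases "i < L")
  case True
  assume h: "x \<in> rbb_states L N"
  have "x i \<le> (\<Sum>i<L. x i)" using True by (intro member_le_sum) auto
  then show ?thesis using h unfolding rbb_states_def by simp
next
  case False
  assume h: "x \<in> rbb_states L N"
  then show ?thesis using False unfolding rbb_states_def by simp
qed

definition step :: "nat \<Rightarrow> nat \<Rightarrow> (nat \<Rightarrow> nat) \<Rightarrow> (nat \<Rightarrow> nat) \<Rightarrow> bool" where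
  "step L N x y \<longleftrightarrow> x \<in> rbb_states L N \<and> y \<in> rbb_states L N \<and> 0 < rbb_trans L x y"

definition c0 :: "nat \<Rightarrow> nat \<Rightarrow> nat" where "c0 N = (\<lambda>i. if i = 0 then N else 0)"

lemma c0_in: "0 < L \<Longrightarrow> c0 N \<in> rbb_states L N"
  unfolding rbb_states_def c0_def by (simp add: sum.delta)

lemma is_c0:
  assumes x: "x \<in> rbb_states L N" and L: "0 < L" and z: "\<forall>i. i \<noteq> 0 \<longrightarrow> x i = 0"
  shows "x = c0 N"
proof -
  have "(\<Sum>i<L. x i) = (\<Sum>i<L. if i = 0 then x 0 else 0)" by (rule sum.cong) (use z in auto)
  then have "x 0 = N" using x L unfolding rbb_states_def by (simp add: sum.delta)
  then show ?thesis using z unfolding c0_def by (auto simp: fun_eq_iff)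
qed

lemma to_c0:
  assumes L: "0 < L"
  shows "x \<in> rbb_states L N \<Longrightarrow> (step L N)\<^sup>*\<^sup>* x (c0 N)"
proof (induction "N - x 0" arbitrary: x rule: less_induct)
  case less
  show ?case
  proof (cases "\<forall>i. i \<noteq> 0 \<longrightarrow> x i = 0")
    case True
    then show ?thesis using is_c0[OF less.prems L] by simp
  next
    case False
    then obtain i where i0: "i \<noteq> 0" and xi: "0 < x i" by auto
    have iL: "i < L" using less.prems xi unfolding rbb_states_def by (cases "i < L") auto
    define K where "K = nonempty_count L x"
    define x' where "x' = (\<lambda>j. x j - occ x j + (if j = 0 then K else 0))"
    have pw: "x' j + occ x j = x j + (if j = 0 then K else 0)" for j
      unfolding x'_def using occ_le[of x j] by simp
    have "(\<Sum>j<L. x' j) + (\<Sum>j<L. occ x j) = (\<Sum>j<L. x j) + (\<Sum>j<L. if j = 0 then K else 0)"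
      unfolding sum.distrib[symmetric] using pw by simp
    then have "(\<Sum>j<L. x' j) = N" using less.prems L unfolding rbb_states_def K_def nonempty_count_sum
      by (simp add: sum.delta)
    moreover have "\<forall>j\<ge>L. x' j = 0" using less.prems L unfolding x'_def rbb_states_def occ_def by auto
    ultimately have x'S: "x' \<in> rbb_states L N" unfolding rbb_states_def by simp
    have cond: "\<forall>j. x j \<le> x' j + occ x j" using pw by simp
    have st: "step L N x x'" unfolding step_def
      using less.prems x'S trans_pos[OF L less.prems x'S cond] by auto
    have "(\<Sum>j\<in>{0,i}. occ x j) \<le> (\<Sum>j<L. occ x j)" by (rule sum_mono2) (use iL L in auto)
    then have "occ x 0 + 1 \<le> K" using i0 xi unfolding K_def nonempty_count_sum by (simp add: occ_def)
    then have "x 0 < x' 0" unfolding x'_def using occ_le[of x 0] by simp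
    moreover have "x' 0 \<le> N" by (rule state_le[OF x'S])
    ultimately have "N - x' 0 < N - x 0" by simp
    then have "(step L N)\<^sup>*\<^sup>* x' (c0 N)" using less.hyps x'S by blast
    then show ?thesis using st by (meson converse_rtranclp_into_rtranclp)
  qed
qed

lemma from_c0:
  assumes L: "0 < L"
  shows "x \<in> rbb_states L N \<Longrightarrow> (step L N)\<^sup>*\<^sup>* (c0 N) x"
proof (induction "N - x 0" arbitrary: x rule: less_induct)
  case less
  show ?case
  proof (cases "\<forall>i. i \<noteq> 0 \<longrightarrow> x i = 0")
    case True
    then show ?thesis using is_c0[OF less.prems L] by simp
  next
    case False
    then obtain j where j0: "j \<noteq> 0" and xj: "0 < x j" by auto
    have jL: "j < L" using less.prems xj unfolding rbb_states_def by (cases "j < L") auto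
    define y where "y = x(0 := x 0 + 1, j := x j - 1)"
    have pw: "y i + (if i = j then 1 else 0) = x i + (if i = 0 then 1 else 0)" for i
      unfolding y_def using j0 xj by auto
    have "(\<Sum>i<L. y i) + (\<Sum>i<L. if i = j then 1 else 0) = (\<Sum>i<L. x i) + (\<Sum>i<L. if i = 0 then 1 else (0::nat))"
      unfolding sum.distrib[symmetric] using pw by simp
    then have "(\<Sum>i<L. y i) = N" using less.prems L jL unfolding rbb_states_def
      by (simp add: sum.delta)
    moreover have "\<forall>i\<ge>L. y i = 0" using less.prems L jL unfolding y_def rbb_states_def by auto
    ultimately have yS: "y \<in> rbb_states L N" unfolding rbb_states_def by simp
    have "\<forall>i. y i \<le> x i + occ y i" unfolding y_def using j0 by (auto simp: occ_def)
    then have st: "step L N y x" unfolding step_def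
      using less.prems yS trans_pos[OF L yS less.prems] by auto
    have "y 0 = x 0 + 1" unfolding y_def using j0 by simp
    moreover have "y 0 \<le> N" by (rule state_le[OF yS])
    ultimately have "N - y 0 < N - x 0" by simp
    then have "(step L N)\<^sup>*\<^sup>* (c0 N) y" using less.hyps yS by blast
    then show ?thesis using st by (meson rtranclp.rtrancl_into_rtrancl)
  qed
qed

lemma irred: "0 < L \<Longrightarrow> x \<in> rbb_states L N \<Longrightarrow> y \<in> rbb_states L N \<Longrightarrow> (step L N)\<^sup>*\<^sup>* x y"
  using to_c0 from_c0 by (metis rtranclp_trans)

lemma pos_stat:
  assumes L: "0 < L" and st: "rbb_stationary L N \<nu>" and y: "y \<in> rbb_states L N"
  shows "0 < \<nu> y"
proof -
  have nn: "\<forall>x\<in>rbb_states L N. 0 \<le> \<nu> x" and s1: "(\<Sum>x\<in>rbb_states L N. \<nu> x) = 1"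
    and inv: "\<forall>z\<in>rbb_states L N. \<nu> z = (\<Sum>x\<in>rbb_states L N. \<nu> x * rbb_trans L x z)"
    using st unfolding rbb_stationary_def by auto
  obtain x0 where x0: "x0 \<in> rbb_states L N" "0 < \<nu> x0"
  proof (rule ccontr)
    assume "\<not> thesis"
    then have "\<forall>x\<in>rbb_states L N. \<nu> x \<le> 0" using that by force
    then have "(\<Sum>x\<in>rbb_states L N. \<nu> x) \<le> 0" by (simp add: sum_nonpos)
    then show False using s1 by simp
  qed
  have "(step L N)\<^sup>*\<^sup>* x0 y" by (rule irred[OF L x0(1) y])
  then show ?thesis
  proof (induction rule: rtranclp_induct)
    case base then show ?case using x0 by simp
  next
    case (step z w)
    then have zw: "z \<in> rbb_states L N" "w \<in> rbb_states L N" "0 < rbb_trans L z w" unfolding step_def by auto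
    have "\<nu> z * rbb_trans L z w \<le> (\<Sum>x\<in>rbb_states L N. \<nu> x * rbb_trans L x w)"
      by (rule member_le_sum) (use zw nn trans_nonneg finite_states in auto)
    moreover have "0 < \<nu> z * rbb_trans L z w" using step.IH zw by simp
    ultimately show ?case using inv zw by simp
  qed
qed

lemma unique_stat:
  assumes L: "0 < L" and s\<nu>: "rbb_stationary L N \<nu>" and s\<mu>: "rbb_stationary L N \<mu>"
    and x: "x \<in> rbb_states L N"
  shows "\<nu> x = \<mu> x"
proof -
  let ?S = "rbb_states L N"
  have fin: "finite ?S" by (rule finite_states)
  have ne: "?S \<noteq> {}" using c0_in[OF L] by auto
  have mpos: "\<And>x. x \<in> ?S \<Longrightarrow> 0 < \<mu> x" using pos_stat[OF L s\<mu>] by blast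
  define c where "c = Min ((\<lambda>x. \<nu> x / \<mu> x) ` ?S)"
  obtain y where y: "y \<in> ?S" "c = \<nu> y / \<mu> y"
  proof -
    have "c \<in> (\<lambda>x. \<nu> x / \<mu> x) ` ?S" unfolding c_def using fin ne by (intro Min_in) auto
    then show ?thesis using that by blast
  qed
  define d where "d = (\<lambda>x. \<nu> x - c * \<mu> x)"
  have dnn: "0 \<le> d x" if "x \<in> ?S" for x
  proof -
    have "c \<le> \<nu> x / \<mu> x" unfolding c_def using fin that by (intro Min_le) auto
    then show ?thesis unfolding d_def using mpos[OF that] by (simp add: field_simps)
  qed
  have dy: "d y = 0" unfolding d_def using y mpos[OF y(1)] by simp
  have dinv: "d z = (\<Sum>w\<in>?S. d w * rbb_trans L w z)" if "z \<in> ?S" for z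
  proof -
    have "\<nu> z = (\<Sum>w\<in>?S. \<nu> w * rbb_trans L w z)" "\<mu> z = (\<Sum>w\<in>?S. \<mu> w * rbb_trans L w z)"
      using s\<nu> s\<mu> that unfolding rbb_stationary_def by auto
    then show ?thesis unfolding d_def by (simp add: sum_subtractf sum_distrib_left algebra_simps)
  qed
  have bk: "(step L N)\<^sup>*\<^sup>* u y \<Longrightarrow> d u = 0" for u
  proof (induction rule: converse_rtranclp_induct)
    case base then show ?case using dy by simp
  next
    case (step u z)
    then have uz: "u \<in> ?S" "z \<in> ?S" "0 < rbb_trans L u z" unfolding step_def by auto
    have "d u * rbb_trans L u z \<le> (\<Sum>w\<in>?S. d w * rbb_trans L w z)"
      by (rule member_le_sum) (use uz dnn trans_nonneg finite_states in auto)
    then have "d u * rbb_trans L u z \<le> 0" using dinv[OF uz(2)] step.IH by simp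
    then have "d u \<le> 0" using uz(3) by (simp add: mult_le_0_iff)
    then show ?case using dnn[OF uz(1)] by simp
  qed
  have all: "\<nu> w = c * \<mu> w" if "w \<in> ?S" for w
    using bk[OF irred[OF L that y(1)]] unfolding d_def by simp
  have "1 = (\<Sum>w\<in>?S. \<nu> w)" using s\<nu> unfolding rbb_stationary_def by (elim conjE) simp
  also have "\<dots> = c * (\<Sum>w\<in>?S. \<mu> w)" using all by (simp add: sum_distrib_left)
  also have "\<dots> = c" using s\<mu> unfolding rbb_stationary_def by (elim conjE) simp
  finally show ?thesis using all[OF x] by simp
qed

definition sw :: "nat \<Rightarrow> nat \<Rightarrow> nat \<Rightarrow> nat" where
  "sw a b i = (if i = a then b else if i = b then a else i)"

lemma sw_sw[simp]: "sw a b (sw a b i) = i" unfolding sw_def by auto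

lemma sw_ge: "a < L \<Longrightarrow> b < L \<Longrightarrow> L \<le> i \<Longrightarrow> sw a b i = i" unfolding sw_def by auto

lemma sw_bij: "a < L \<Longrightarrow> b < L \<Longrightarrow> bij_betw (sw a b) {..<L} {..<L}"
  by (rule bij_betw_byWitness[where f'="sw a b"]) (auto simp: sw_def)

lemma sum_sw: "a < L \<Longrightarrow> b < L \<Longrightarrow> (\<Sum>i<L. f (sw a b i)) = (\<Sum>i<L. f i)"
  using sum.reindex_bij_betw[OF sw_bij] by blast

lemma prod_sw: "a < L \<Longrightarrow> b < L \<Longrightarrow> (\<Prod>i<L. f (sw a b i)) = (\<Prod>i<L. f i)"
  using prod.reindex_bij_betw[OF sw_bij] by blast

lemma all_sw: "(\<forall>i. P (sw a b i)) \<longleftrightarrow> (\<forall>i. P i)" by (metis sw_sw)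

lemma states_sw:
  assumes "a < L" "b < L" "\<eta> \<in> rbb_states L N"
  shows "(\<lambda>i. \<eta> (sw a b i)) \<in> rbb_states L N"
  using assms sum_sw[OF assms(1,2), of \<eta>] sw_ge[OF assms(1,2)] unfolding rbb_states_def by auto

lemma count_sw: "a < L \<Longrightarrow> b < L \<Longrightarrow> nonempty_count L (\<lambda>i. \<eta> (sw a b i)) = nonempty_count L \<eta>"
  unfolding nonempty_count_sum using sum_sw[of a L b "occ \<eta>"] by (simp add: occ_def)

lemma mp_sw: "a < L \<Longrightarrow> b < L \<Longrightarrow> multinom_prob L k (\<lambda>i. c (sw a b i)) = multinom_prob L k c"
  unfolding multinom_prob_def using sum_sw[of a L b c] prod_sw[of a L b "\<lambda>i. fact (c i)"] sw_ge[of a L b]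
  by (smt (verit) le_refl)

lemma trans_sw:
  assumes "a < L" "b < L"
  shows "rbb_trans L (\<lambda>i. x (sw a b i)) (\<lambda>i. y (sw a b i)) = rbb_trans L x y"
proof -
  have o: "occ (\<lambda>i. x (sw a b i)) i = occ x (sw a b i)" for i by (simp add: occ_def)
  have c: "(\<forall>i. x (sw a b i) \<le> y (sw a b i) + occ x (sw a b i)) \<longleftrightarrow> (\<forall>i. x i \<le> y i + occ x i)"
    by (rule all_sw)
  show ?thesis unfolding rbb_trans_def o c count_sw[OF assms]
    using mp_sw[OF assms, of _ "\<lambda>i. y i + occ x i - x i"] by simp
qed

lemma sum_states_sw:
  assumes "a < L" "b < L"
  shows "(\<Sum>\<eta>\<in>rbb_states L N. F (\<lambda>i. \<eta> (sw a b i))) = (\<Sum>\<eta>\<in>rbb_states L N. F \<eta>)"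
  by (rule sum.reindex_bij_witness[where i="\<lambda>\<eta> i. \<eta> (sw a b i)" and j="\<lambda>\<eta> i. \<eta> (sw a b i)"])
     (auto intro: states_sw[OF assms])

lemma stat_sw:
  assumes ab: "a < L" "b < L" and st: "rbb_stationary L N \<nu>"
  shows "rbb_stationary L N (\<lambda>\<eta>. \<nu> (\<lambda>i. \<eta> (sw a b i)))"
proof -
  have nn: "\<forall>x\<in>rbb_states L N. 0 \<le> \<nu> x" and s1: "(\<Sum>x\<in>rbb_states L N. \<nu> x) = 1"
    and inv: "\<forall>z\<in>rbb_states L N. \<nu> z = (\<Sum>x\<in>rbb_states L N. \<nu> x * rbb_trans L x z)"
    using st unfolding rbb_stationary_def by auto
  have "\<nu> (\<lambda>i. \<eta>' (sw a b i)) = (\<Sum>\<eta>\<in>rbb_states L N. \<nu> (\<lambda>i. \<eta> (sw a b i)) * rbb_trans L \<eta> \<eta>')"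
    if "\<eta>' \<in> rbb_states L N" for \<eta>'
  proof -
    have "\<nu> (\<lambda>i. \<eta>' (sw a b i)) = (\<Sum>\<eta>\<in>rbb_states L N. \<nu> \<eta> * rbb_trans L \<eta> (\<lambda>i. \<eta>' (sw a b i)))"
      using inv states_sw[OF ab that] by blast
    also have "\<dots> = (\<Sum>\<eta>\<in>rbb_states L N. \<nu> (\<lambda>i. \<eta> (sw a b i)) * rbb_trans L (\<lambda>i. \<eta> (sw a b i)) (\<lambda>i. \<eta>' (sw a b i)))"
      by (rule sum_states_sw[OF ab, symmetric])
    also have "\<dots> = (\<Sum>\<eta>\<in>rbb_states L N. \<nu> (\<lambda>i. \<eta> (sw a b i)) * rbb_trans L \<eta> \<eta>')"
      using trans_sw[OF ab] by simp
    finally show ?thesis .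
  qed
  moreover have "(\<Sum>\<eta>\<in>rbb_states L N. \<nu> (\<lambda>i. \<eta> (sw a b i))) = 1"
    using sum_states_sw[OF ab, of \<nu>] s1 by simp
  moreover have "\<forall>\<eta>\<in>rbb_states L N. 0 \<le> \<nu> (\<lambda>i. \<eta> (sw a b i))" using nn states_sw[OF ab] by blast
  ultimately show ?thesis unfolding rbb_stationary_def by blast
qed

lemma expect_sw:
  assumes L: "0 < L" and ab: "a < L" "b < L" and st: "rbb_stationary L N \<nu>"
  shows "rbb_expect L N \<nu> F = rbb_expect L N \<nu> (\<lambda>\<eta>. F (\<lambda>i. \<eta> (sw a b i)))"
proof -
  have sym: "\<nu> (\<lambda>i. \<eta> (sw a b i)) = \<nu> \<eta>" if "\<eta> \<in> rbb_states L N" for \<eta>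
    using unique_stat[OF L stat_sw[OF ab st] st that] by simp
  have "rbb_expect L N \<nu> (\<lambda>\<eta>. F (\<lambda>i. \<eta> (sw a b i)))
      = (\<Sum>\<eta>\<in>rbb_states L N. \<nu> (\<lambda>i. \<eta> (sw a b i)) * F (\<lambda>i. \<eta> (sw a b i)))"
    unfolding rbb_expect_def using sym by (intro sum.cong) auto
  also have "\<dots> = rbb_expect L N \<nu> F"
    unfolding rbb_expect_def by (rule sum_states_sw[OF ab, where F="\<lambda>\<eta>. \<nu> \<eta> * F \<eta>"])
  finally show ?thesis ..
qed

lemma expect_sum: "rbb_expect L N \<nu> (\<lambda>\<eta>. \<Sum>i\<in>I. f i \<eta>) = (\<Sum>i\<in>I. rbb_expect L N \<nu> (f i))"
  unfolding rbb_expect_def by (simp add: sum_distrib_left sum.swap[of _ I])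

lemma stat_D:
  assumes L: "0 < L" and st: "rbb_stationary L N \<nu>"
  shows "rbb_expect L N \<nu> (\<lambda>\<eta>. - 2 * real N + 2 * real (nonempty_count L \<eta>)
       + 2 * real (nonempty_count L \<eta>) * (real N - real (nonempty_count L \<eta>)) / real L
       + real (nonempty_count L \<eta>) * (real (nonempty_count L \<eta>) - 1) / real L) = 0"
proof -
  let ?S = "rbb_states L N"
  define Q where "Q = (\<lambda>\<eta>::nat\<Rightarrow>nat. (\<Sum>i<L. (real (\<eta> i))^2))"
  define D where "D = (\<lambda>\<eta>. - 2 * real N + 2 * real (nonempty_count L \<eta>)
       + 2 * real (nonempty_count L \<eta>) * (real N - real (nonempty_count L \<eta>)) / real L
       + real (nonempty_count L \<eta>) * (real (nonempty_count L \<eta>) - 1) / real L)"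
  have inv: "\<forall>z\<in>?S. \<nu> z = (\<Sum>x\<in>?S. \<nu> x * rbb_trans L x z)"
    using st unfolding rbb_stationary_def by blast
  have "(\<Sum>\<eta>'\<in>?S. \<nu> \<eta>' * Q \<eta>') = (\<Sum>\<eta>'\<in>?S. (\<Sum>\<eta>\<in>?S. \<nu> \<eta> * rbb_trans L \<eta> \<eta>') * Q \<eta>')"
  proof (rule sum.cong[OF refl])
    fix z assume "z \<in> ?S"
    then have "\<nu> z = (\<Sum>x\<in>?S. \<nu> x * rbb_trans L x z)" using inv by blast
    then show "\<nu> z * Q z = (\<Sum>x\<in>?S. \<nu> x * rbb_trans L x z) * Q z" by (simp only:)
  qed
  also have "\<dots> = (\<Sum>\<eta>\<in>?S. \<nu> \<eta> * (\<Sum>\<eta>'\<in>?S. rbb_trans L \<eta> \<eta>' * Q \<eta>'))"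
  proof -
    have "(\<Sum>\<eta>'\<in>?S. (\<Sum>\<eta>\<in>?S. \<nu> \<eta> * rbb_trans L \<eta> \<eta>') * Q \<eta>')
        = (\<Sum>\<eta>'\<in>?S. \<Sum>\<eta>\<in>?S. \<nu> \<eta> * (rbb_trans L \<eta> \<eta>' * Q \<eta>'))"
      by (simp add: sum_distrib_right mult.assoc)
    also have "\<dots> = (\<Sum>\<eta>\<in>?S. \<Sum>\<eta>'\<in>?S. \<nu> \<eta> * (rbb_trans L \<eta> \<eta>' * Q \<eta>'))"
      by (rule sum.swap)
    also have "\<dots> = (\<Sum>\<eta>\<in>?S. \<nu> \<eta> * (\<Sum>\<eta>'\<in>?S. rbb_trans L \<eta> \<eta>' * Q \<eta>'))"
      by (simp add: sum_distrib_left)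
    finally show ?thesis .
  qed
  also have "\<dots> = (\<Sum>\<eta>\<in>?S. \<nu> \<eta> * Q \<eta> + \<nu> \<eta> * D \<eta>)"
    apply (intro sum.cong refl)
    subgoal for \<eta>
    proof -
      assume h: "\<eta> \<in> ?S"
      have eq: "(\<Sum>\<eta>'\<in>?S. rbb_trans L \<eta> \<eta>' * Q \<eta>') = Q \<eta> + D \<eta>"
        using T_Q[OF L h] unfolding Q_def D_def by linarith
      show ?thesis unfolding eq by (simp add: distrib_left)
    qed
    done
  finally have "(\<Sum>\<eta>\<in>?S. \<nu> \<eta> * D \<eta>) = 0" by (simp add: sum.distrib)
  then show ?thesis unfolding rbb_expect_def D_def .
qed

lemma expect_occ:
  assumes L: "0 < L" and i: "i < L" and st: "rbb_stationary L N \<nu>"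
  shows "rbb_expect L N \<nu> (\<lambda>\<eta>. real (occ \<eta> i)) = rbb_expect L N \<nu> (\<lambda>\<eta>. real (occ \<eta> 0))"
  using expect_sw[OF L _ i st, of 0 "\<lambda>\<eta>. real (occ \<eta> 0)"] L by (simp add: occ_def sw_def)

lemma expect_pair:
  assumes L: "1 < L" and i: "i < L" and j: "j < L" and ij: "i \<noteq> j" and st: "rbb_stationary L N \<nu>"
  shows "rbb_expect L N \<nu> (\<lambda>\<eta>. real (occ \<eta> i) * real (occ \<eta> j))
       = rbb_expect L N \<nu> (\<lambda>\<eta>. real (occ \<eta> 0) * real (occ \<eta> 1))"
proof -
  define j' where "j' = sw 0 i j"
  have j'L: "j' < L" unfolding j'_def sw_def using i j L by auto
  have j'0: "j' \<noteq> 0" unfolding j'_def sw_def using ij by auto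
  have L0: "0 < L" using L by simp
  have "rbb_expect L N \<nu> (\<lambda>\<eta>. real (occ \<eta> 0) * real (occ \<eta> 1))
      = rbb_expect L N \<nu> (\<lambda>\<eta>. real (occ \<eta> 0) * real (occ \<eta> j'))"
    using expect_sw[OF L0 _ j'L st, of 1 "\<lambda>\<eta>. real (occ \<eta> 0) * real (occ \<eta> 1)"] L j'0
    by (simp add: occ_def sw_def)
  also have "\<dots> = rbb_expect L N \<nu> (\<lambda>\<eta>. real (occ \<eta> i) * real (occ \<eta> j))"
    using expect_sw[OF L0 _ i st, of 0 "\<lambda>\<eta>. real (occ \<eta> 0) * real (occ \<eta> j')"] L
    unfolding j'_def by (simp add: occ_def sw_def[of 0 i 0])
  finally show ?thesis ..
qed

theorem mainTheorem8:
  fixes r :: real and L N :: nat and \<nu> :: "(nat \<Rightarrow> nat) \<Rightarrow> real"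
  assumes "r > 0" and "L \<ge> 2" and "real N = r * real L"
    and "rbb_stationary L N \<nu>"
  shows "rbb_expect L N \<nu> (\<lambda>\<eta>. real (occ \<eta> 0) * real (occ \<eta> 1))
           - rbb_expect L N \<nu> (\<lambda>\<eta>. real (occ \<eta> 0)) * rbb_expect L N \<nu> (\<lambda>\<eta>. real (occ \<eta> 1))
         = - (rbb_expect L N \<nu> (\<lambda>\<eta>. real (occ \<eta> 0)))\<^sup>2
           + 2 * rbb_expect L N \<nu> (\<lambda>\<eta>. real (occ \<eta> 0)) * (((r + 1) * real L - 1) / (real L - 1))
           - 2 * r * (real L / (real L - 1))"
proof -
  note st = assms(4)
  have L0: "0 < L" and L1: "1 < L" using assms(2) by auto
  define E where "E = rbb_expect L N \<nu>"
  define e where "e = E (\<lambda>\<eta>. real (occ \<eta> 0))"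
  define p where "p = E (\<lambda>\<eta>. real (occ \<eta> 0) * real (occ \<eta> 1))"
  define k where "k = (\<lambda>\<eta>. real (nonempty_count L \<eta>))"
  have lin: "E (\<lambda>\<eta>. a * f \<eta> + b * g \<eta> + c) = a * E f + b * E g + c" for a b c f g
  proof -
    have s1: "(\<Sum>\<eta>\<in>rbb_states L N. \<nu> \<eta>) = 1" using st unfolding rbb_stationary_def by (elim conjE)
    have s2: "(\<Sum>\<eta>\<in>rbb_states L N. c * \<nu> \<eta>) = c" using s1 by (simp add: sum_distrib_left[symmetric])
    show ?thesis unfolding E_def rbb_expect_def using s2
      by (simp add: algebra_simps sum.distrib sum_distrib_left)
  qed
  have ei: "E (\<lambda>\<eta>. real (occ \<eta> i)) = e" if "i < L" for i
    unfolding E_def e_def using expect_occ[OF L0 that st] .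
  have pij: "E (\<lambda>\<eta>. real (occ \<eta> i) * real (occ \<eta> j)) = (if i = j then e else p)" if "i < L" "j < L" for i j
  proof (cases "i = j")
    case True then show ?thesis using ei[OF that(1)] by (simp add: occ_sq)
  next
    case False then show ?thesis unfolding E_def p_def using expect_pair[OF L1 that False st] by simp
  qed
  have EK: "E k = real L * e"
  proof -
    have "E k = (\<Sum>i<L. E (\<lambda>\<eta>. real (occ \<eta> i)))"
      unfolding k_def k_real E_def by (rule expect_sum)
    then show ?thesis using ei by simp
  qed
  have EK2: "E (\<lambda>\<eta>. k \<eta> * k \<eta>) = real L * e + real L * (real L - 1) * p"
  proof -
    have "E (\<lambda>\<eta>. k \<eta> * k \<eta>) = E (\<lambda>\<eta>. \<Sum>i<L. \<Sum>j<L. real (occ \<eta> i) * real (occ \<eta> j))"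
      unfolding k_def k_real by (simp add: sum_product)
    also have "\<dots> = (\<Sum>i<L. \<Sum>j<L. E (\<lambda>\<eta>. real (occ \<eta> i) * real (occ \<eta> j)))"
      unfolding E_def expect_sum ..
    also have "\<dots> = (\<Sum>i<L. \<Sum>j<L. if i = j then e else p)"
      using pij by (intro sum.cong refl) auto
    also have "\<dots> = (\<Sum>i<L. e + (real L - 1) * p)"
    proof (rule sum.cong[OF refl])
      fix i assume "i \<in> {..<L}"
      then have "(\<Sum>j<L. if i = j then e else p) = e + (\<Sum>j\<in>{..<L}-{i}. if i = j then e else p)"
        by (simp add: sum.remove)
      also have "(\<Sum>j\<in>{..<L}-{i}. if i = j then e else p) = (\<Sum>j\<in>{..<L}-{i}. p)"
        by (rule sum.cong) auto
      also have "\<dots> = (real L - 1) * p" using \<open>i \<in> {..<L}\<close> by (simp add: of_nat_diff)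
      finally show "(\<Sum>j<L. if i = j then e else p) = e + (real L - 1) * p" .
    qed
    finally show ?thesis by (simp add: algebra_simps)
  qed
  have D: "E (\<lambda>\<eta>. (2 / real L - 1 / real L) * (k \<eta> * k \<eta>) * (-1) + (2 + 2 * real N / real L - 1 / real L) * k \<eta> + (- 2 * real N)) = 0"
  proof -
    have "E (\<lambda>\<eta>. (2 / real L - 1 / real L) * (k \<eta> * k \<eta>) * (-1) + (2 + 2 * real N / real L - 1 / real L) * k \<eta> + (- 2 * real N))
       = E (\<lambda>\<eta>. - 2 * real N + 2 * real (nonempty_count L \<eta>)
       + 2 * real (nonempty_count L \<eta>) * (real N - real (nonempty_count L \<eta>)) / real L
       + real (nonempty_count L \<eta>) * (real (nonempty_count L \<eta>) - 1) / real L)"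
      unfolding k_def by (rule arg_cong[where f=E], rule ext) (use L0 in \<open>simp add: field_simps\<close>)
    then show ?thesis using stat_D[OF L0 st] unfolding E_def by simp
  qed
  have "-(2 / real L - 1 / real L) * E (\<lambda>\<eta>. k \<eta> * k \<eta>) + (2 + 2 * real N / real L - 1 / real L) * E k + (- 2 * real N) = 0"
    using D lin[of "-(2 / real L - 1 / real L)" "\<lambda>\<eta>. k \<eta> * k \<eta>" "2 + 2 * real N / real L - 1 / real L" k "- 2 * real N"]
    by simp
  then have "real L * real L * ((real L - 1) * p) = real L * real L * (2 * e * ((r + 1) * real L - 1) - 2 * r * real L)"
    unfolding EK EK2 assms(3) using L0 by (simp add: field_simps)
  then have key: "(real L - 1) * p = 2 * e * ((r + 1) * real L - 1) - 2 * r * real L"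
    using L0 by simp
  have Lm: "real L - 1 > 0" using L1 by simp
  have p_eq: "p = 2 * e * (((r + 1) * real L - 1) / (real L - 1)) - 2 * r * (real L / (real L - 1))"
  proof -
    have p1: "p = (2 * e * ((r + 1) * real L - 1) - 2 * r * real L) / (real L - 1)"
      using key Lm by (simp add: eq_divide_eq mult.commute)
    show ?thesis unfolding p1 by (simp add: diff_divide_distrib) (simp add: diff_divide_distrib[symmetric])
  qed
  have e1: "E (\<lambda>\<eta>. real (occ \<eta> 1)) = e" using ei[OF L1] .
  show ?thesis unfolding E_def[symmetric] e_def[symmetric] p_def[symmetric] e1 p_eq
    by (simp add: power2_eq_square)
qed

end
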